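(* Let $1\le m\le n-1$, let $A\otimes B\in Y$, and let $g\in\mathrm{GL}_{m(n-m)}(\mathbb{R})$ be such that $(A\otimes B)g\in Y$. Then $g$ is an elementary tensor: $g=g_m\otimes g_{n-m}$ for some $g_m\in\mathrm{GL}_m(\mathbb{R})$ and $g_{n-m}\in\mathrm{GL}_{n-m}(\mathbb{R})$.
   Context: $Y=\{A\otimes B: A\in\mathrm{Mat}_{n\times m}(\mathbb{R}),B\in\mathrm{Mat}_{n\times(n-m)}(\mathbb{R})$ of full rank, column space of $A$ orthogonal to column space of $B\}$, where $A\otimes B=(a_{ij}B)_{i,j}$ denotes the Kronecker product (an $n^2\times m(n-m)$ matrix); similarly $g_m\otimes g_{n-m}$ is the Kronecker product. *)

theory Defs
  imports "Jordan_Normal_Form.DL_Rank"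
begin

definition kron :: "'a::times mat \<Rightarrow> 'a mat \<Rightarrow> 'a mat" where
  "kron A B = mat (dim_row A * dim_row B) (dim_col A * dim_col B)
     (\<lambda>(r, c). A $$ (r div dim_row B, c div dim_col B) * B $$ (r mod dim_row B, c mod dim_col B))"

definition full_rank :: "real mat \<Rightarrow> bool" where
  "full_rank A \<longleftrightarrow> vec_space.rank (dim_row A) A = min (dim_row A) (dim_col A)"

definition Y :: "nat \<Rightarrow> nat \<Rightarrow> real mat set" where
  "Y n m = {kron A B | A B. A \<in> carrier_mat n m \<and> B \<in> carrier_mat n (n - m)
       \<and> full_rank A \<and> full_rank B \<and> transpose_mat A * B = 0\<^sub>m m (n - m)}"

end

theory Submission
  imports Defs
begin

lemma rank_nondistinct_lt:
  assumes A: "A \<in> carrier_mat n nc" and nd: "\<not> distinct (cols A)"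
  shows "vec_space.rank n A < nc"
proof -
  interpret vec_space "TYPE('a::field)" n .
  obtain S where S: "maximal S (\<lambda>T. T \<subseteq> set (cols A) \<and> lin_indpt T)"
    using maximal_exists[of "(\<lambda>T. T \<subseteq> set (cols A) \<and> lin_indpt T)" "card (set (cols A))" "{}"]
    by (meson List.finite_set card_mono empty_iff empty_subsetI finite_lin_indpt2 rev_finite_subset)
  then have "card S \<le> card (set (cols A))" by (simp add: card_mono maximal_def)
  moreover have "card (set (cols A)) < nc"
    using A nd card_distinct[of "cols A"] card_length[of "cols A"] cols_length[of A]
    by (metis carrier_matD(2) nat_less_le)
  ultimately show ?thesis using rank_card_indpt[OF A S] by simp
qed

lemma full_rank_kernel:
  fixes A :: "'a::field mat"
  assumes A: "A \<in> carrier_mat n nc" and r: "vec_space.rank n A = nc"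
    and v: "v \<in> carrier_vec nc" and Av: "A *\<^sub>v v = 0\<^sub>v n"
  shows "v = 0\<^sub>v nc"
proof (rule ccontr)
  assume nz: "v \<noteq> 0\<^sub>v nc"
  interpret vec_space "TYPE('a)" n .
  show False
  proof (cases "distinct (cols A)")
    case True
    then have "lin_indpt (set (cols A))" using full_rank_lin_indpt r A by auto
    then show False using lin_depI[OF A v nz Av] True by blast
  next
    case False
    then show False using rank_nondistinct_lt[OF A] r by auto
  qed
qed

lemma real_sprod_self_0:
  fixes x :: "real vec"
  assumes "x \<in> carrier_vec k" "x \<bullet> x = 0"
  shows "x = 0\<^sub>v k"
proof -
  have "(\<Sum>i\<in>{0..<k}. x $ i * x $ i) = 0" using assms unfolding scalar_prod_def by simp
  then have "\<forall>i\<in>{0..<k}. x $ i * x $ i = 0"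
    by (subst (asm) sum_nonneg_eq_0_iff) auto
  then show ?thesis using assms(1) by (intro eq_vecI) auto
qed

lemma left_inverse_exists:
  fixes A :: "real mat"
  assumes A: "A \<in> carrier_mat n k" and r: "vec_space.rank n A = k"
  shows "\<exists>L. L \<in> carrier_mat k n \<and> L * A = 1\<^sub>m k"
proof -
  define G where "G = transpose_mat A * A"
  have G: "G \<in> carrier_mat k k" using A unfolding G_def by auto
  have "det G \<noteq> 0"
  proof
    assume "det G = 0"
    then obtain v where v: "v \<in> carrier_vec k" "v \<noteq> 0\<^sub>v k" "G *\<^sub>v v = 0\<^sub>v k"
      using det_0_iff_vec_prod_zero_field[OF G] by blast
    have Av: "A *\<^sub>v v \<in> carrier_vec n" using A v by auto
    have "(A *\<^sub>v v) \<bullet> (A *\<^sub>v v) = (transpose_mat A *\<^sub>v (A *\<^sub>v v)) \<bullet> v"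
      using transpose_vec_mult_scalar[OF A v(1) Av] by simp
    also have "transpose_mat A *\<^sub>v (A *\<^sub>v v) = G *\<^sub>v v"
      unfolding G_def using A v by (simp add: assoc_mult_mat_vec)
    also have "\<dots> \<bullet> v = 0" using v by simp
    finally have "A *\<^sub>v v = 0\<^sub>v n" using real_sprod_self_0[OF Av] by simp
    then show False using full_rank_kernel[OF A r v(1)] v(2) by simp
  qed
  from det_non_zero_imp_unit[OF G this, of "()"]
  obtain C where C: "C \<in> carrier_mat k k" "C * G = 1\<^sub>m k"
    unfolding Units_def ring_mat_def by auto
  show ?thesis
  proof (intro exI conjI)
    show "C * transpose_mat A \<in> carrier_mat k n" using C A by auto
    have "C * transpose_mat A * A = C * G" unfolding G_def
      using C A by (simp add: assoc_mult_mat)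
    then show "C * transpose_mat A * A = 1\<^sub>m k" using C by simp
  qed
qed


lemma kron_carrier[simp]:
  "A \<in> carrier_mat p q \<Longrightarrow> B \<in> carrier_mat r s \<Longrightarrow> kron A B \<in> carrier_mat (p*r) (q*s)"
  unfolding kron_def by auto

lemma kron_dims[simp]: "dim_row (kron A B) = dim_row A * dim_row B" "dim_col (kron A B) = dim_col A * dim_col B"
  unfolding kron_def by auto

lemma kron_index:
  assumes "A \<in> carrier_mat p q" "B \<in> carrier_mat r s" "i < p*r" "j < q*s"
  shows "kron A B $$ (i,j) = A $$ (i div r, j div s) * B $$ (i mod r, j mod s)"
  using assms unfolding kron_def by auto

lemma sum_split_mult:
  fixes p q :: nat and f :: "nat \<Rightarrow> 'b::comm_monoid_add"
  shows "(\<Sum>k<p*q. f k) = (\<Sum>x<p. \<Sum>y<q. f (x*q+y))"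
proof (induction p)
  case 0 then show ?case by simp
next
  case (Suc p)
  have eq: "{..<Suc p * q} = {..<p*q} \<union> {p*q..<p*q+q}" by auto
  have "(\<Sum>k<Suc p*q. f k) = (\<Sum>k<p*q. f k) + (\<Sum>k\<in>{p*q..<p*q+q}. f k)"
    unfolding eq by (rule sum.union_disjoint) auto
  also have "(\<Sum>k\<in>{p*q..<p*q+q}. f k) = (\<Sum>y<q. f (p*q+y))"
    by (rule sum.reindex_bij_witness[of _ "\<lambda>y. p*q+y" "\<lambda>k. k - p*q"]) auto
  finally show ?case using Suc by simp
qed

lemma kron_mult:
  fixes A :: "'a::comm_ring_1 mat"
  assumes A: "A \<in> carrier_mat p q" and B: "B \<in> carrier_mat r s"
    and C: "C \<in> carrier_mat q t" and D: "D \<in> carrier_mat s u"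
  shows "kron A B * kron C D = kron (A*C) (B*D)"
proof (rule eq_matI)
  fix i j assume "i < dim_row (kron (A*C) (B*D))" "j < dim_col (kron (A*C) (B*D))"
  then have i: "i < p*r" and j: "j < t*u" using A B C D by (auto simp: kron_def)
  have r0: "r > 0" using i by (cases r) auto
  have u0: "u > 0" using j by (cases u) auto
  have ir: "i div r < p" "i mod r < r" using i r0 by (auto simp: less_mult_imp_div_less)
  have ju: "j div u < t" "j mod u < u" using j u0 by (auto simp: less_mult_imp_div_less)
  have "(kron A B * kron C D) $$ (i,j) = (\<Sum>k<q*s. kron A B $$ (i,k) * kron C D $$ (k,j))"
    using A B C D i j by (simp add: scalar_prod_def atLeast0LessThan)
  also have "\<dots> = (\<Sum>x<q. \<Sum>y<s. kron A B $$ (i,x*s+y) * kron C D $$ (x*s+y,j))"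
    by (rule sum_split_mult)
  also have "\<dots> = (\<Sum>x<q. \<Sum>y<s. (A $$ (i div r, x) * C $$ (x, j div u)) * (B $$ (i mod r, y) * D $$ (y, j mod u)))"
  proof (intro sum.cong refl)
    fix x y assume x: "x \<in> {..<q}" and y: "y \<in> {..<s}"
    have "Suc x * s \<le> q * s" using x mult_le_mono1[of "Suc x" q s] by simp
    then have k: "x*s+y < q*s" using y by simp
    have "(x*s+y) div s = x" "(x*s+y) mod s = y" using y by auto
    then show "kron A B $$ (i,x*s+y) * kron C D $$ (x*s+y,j) = (A $$ (i div r, x) * C $$ (x, j div u)) * (B $$ (i mod r, y) * D $$ (y, j mod u))"
      using kron_index[OF A B i k] kron_index[OF C D k j] by (simp add: ac_simps)
  qed
  also have "\<dots> = (\<Sum>x<q. A $$ (i div r, x) * C $$ (x, j div u)) * (\<Sum>y<s. B $$ (i mod r, y) * D $$ (y, j mod u))"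
    by (rule sum_product[symmetric])
  also have "\<dots> = (A*C) $$ (i div r, j div u) * (B*D) $$ (i mod r, j mod u)"
    using A B C D ir ju by (simp add: scalar_prod_def atLeast0LessThan)
  also have "\<dots> = kron (A*C) (B*D) $$ (i,j)"
    using kron_index[of "A*C" p t "B*D" r u i j] A B C D i j by simp
  finally show "(kron A B * kron C D) $$ (i,j) = kron (A*C) (B*D) $$ (i,j)" .
qed (use A B C D in auto)

lemma kron_one: "kron (1\<^sub>m p) (1\<^sub>m q) = (1\<^sub>m (p*q) :: 'a::semiring_1 mat)"
proof (rule eq_matI)
  fix i j assume "i < dim_row (1\<^sub>m (p*q) :: 'a mat)" "j < dim_col (1\<^sub>m (p*q) :: 'a mat)"
  then have i: "i < p*q" and j: "j < p*q" by auto
  have q: "q > 0" using i by (cases q) auto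
  have "i div q < p" "j div q < p" using i j by (auto simp: less_mult_imp_div_less)
  moreover have "i mod q < q" "j mod q < q" using q by auto
  moreover have iff: "(i div q = j div q \<and> i mod q = j mod q) = (i = j)"
    by (metis div_mult_mod_eq)
  ultimately have "kron (1\<^sub>m p) (1\<^sub>m q) $$ (i, j) = (if i div q = j div q then 1 else 0) * (if i mod q = j mod q then (1::'a) else 0)"
    using kron_index[of "1\<^sub>m p" p p "1\<^sub>m q" q q i j] i j by simp
  also have "\<dots> = (if i = j then 1 else 0)" using iff by auto
  finally show "kron (1\<^sub>m p) (1\<^sub>m q) $$ (i, j) = (1\<^sub>m (p*q) :: 'a mat) $$ (i, j)"
    using i j by simp
qed (auto simp: kron_def)

lemma kron_eq_one_left:
  fixes U :: "'a::field mat"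
  assumes U: "U \<in> carrier_mat p p" and V: "V \<in> carrier_mat q q" and q: "q > 0" and p: "p > 0"
    and E: "kron U V = 1\<^sub>m (p*q)"
  shows "V $$ (0,0) \<noteq> 0 \<and> U = (1 / V $$ (0,0)) \<cdot>\<^sub>m 1\<^sub>m p"
proof -
  have key: "U $$ (i,j) * V $$ (0,0) = (if i = j then 1 else 0)" if ij: "i < p" "j < p" for i j
  proof -
    have a: "i*q < p*q" "j*q < p*q" using ij q by auto
    have "kron U V $$ (i*q, j*q) = U $$ (i,j) * V $$ (0,0)"
      using kron_index[OF U V a] q by simp
    moreover have "(1\<^sub>m (p*q) :: 'a mat) $$ (i*q, j*q) = (if i = j then 1 else 0)"
      using a q by simp
    ultimately show ?thesis using E by simp
  qed
  have "U $$ (0,0) * V $$ (0,0) = 1" using key[of 0 0] p by simp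
  then have nz: "V $$ (0,0) \<noteq> 0" by auto
  show ?thesis
  proof (intro conjI nz eq_matI)
    fix i j assume "i < dim_row ((1 / V $$ (0,0)) \<cdot>\<^sub>m 1\<^sub>m p)" "j < dim_col ((1 / V $$ (0,0)) \<cdot>\<^sub>m 1\<^sub>m p)"
    then have ij: "i < p" "j < p" by auto
    show "U $$ (i,j) = ((1 / V $$ (0,0)) \<cdot>\<^sub>m 1\<^sub>m p) $$ (i,j)"
      using key[OF ij] nz ij by (auto simp: field_simps)
  qed (use U in auto)
qed

lemma kron_eq_one_right:
  fixes U :: "'a::field mat"
  assumes U: "U \<in> carrier_mat p p" and V: "V \<in> carrier_mat q q" and p: "p > 0" and q: "q > 0"
    and E: "kron U V = 1\<^sub>m (p*q)"
  shows "U $$ (0,0) \<noteq> 0 \<and> V = (1 / U $$ (0,0)) \<cdot>\<^sub>m 1\<^sub>m q"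
proof -
  have key: "U $$ (0,0) * V $$ (i,j) = (if i = j then 1 else 0)" if ij: "i < q" "j < q" for i j
  proof -
    have "q \<le> p*q" using p by simp
    then have a: "i < p*q" "j < p*q" using ij by linarith+
    have "kron U V $$ (i, j) = U $$ (0,0) * V $$ (i,j)"
      using kron_index[OF U V a] ij by simp
    moreover have "(1\<^sub>m (p*q) :: 'a mat) $$ (i, j) = (if i = j then 1 else 0)"
      using a by simp
    ultimately show ?thesis using E by simp
  qed
  have "U $$ (0,0) * V $$ (0,0) = 1" using key[of 0 0] q by simp
  then have nz: "U $$ (0,0) \<noteq> 0" by auto
  show ?thesis
  proof (intro conjI nz eq_matI)
    fix i j assume "i < dim_row ((1 / U $$ (0,0)) \<cdot>\<^sub>m 1\<^sub>m q)" "j < dim_col ((1 / U $$ (0,0)) \<cdot>\<^sub>m 1\<^sub>m q)"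
    then have ij: "i < q" "j < q" by auto
    show "V $$ (i,j) = ((1 / U $$ (0,0)) \<cdot>\<^sub>m 1\<^sub>m q) $$ (i,j)"
      using key[OF ij] nz ij by (auto simp: field_simps)
  qed (use V in auto)
qed


lemma scaled_right_inv_invertible:
  fixes G :: "'a::field mat"
  assumes G: "G \<in> carrier_mat n n" and X: "X \<in> carrier_mat n n"
    and c: "c \<noteq> 0" and E: "G * X = c \<cdot>\<^sub>m 1\<^sub>m n"
  shows "invertible_mat G"
proof -
  define Z where "Z = (1/c) \<cdot>\<^sub>m X"
  have Z: "Z \<in> carrier_mat n n" using X unfolding Z_def by simp
  have "G * Z = (1/c) \<cdot>\<^sub>m (G * X)" unfolding Z_def using G X by (simp add: mult_smult_distrib)
  also have "\<dots> = 1\<^sub>m n" unfolding E using c by (intro eq_matI) auto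
  finally have GZ: "G * Z = 1\<^sub>m n" .
  have ZG: "Z * G = 1\<^sub>m n" using mat_mult_left_right_inverse[OF G Z GZ] .
  show ?thesis unfolding invertible_mat_def inverts_mat_def
    using G Z GZ ZG by auto
qed

theorem mainTheorem10:
  fixes n m :: nat and A B g :: "real mat"
  assumes "1 \<le> m" and "m \<le> n - 1"
    and "A \<in> carrier_mat n m" and "B \<in> carrier_mat n (n - m)"
    and "kron A B \<in> Y n m"
    and "g \<in> carrier_mat (m * (n - m)) (m * (n - m))" and "invertible_mat g"
    and "kron A B * g \<in> Y n m"
  shows "\<exists>gm gnm. gm \<in> carrier_mat m m \<and> invertible_mat gm
           \<and> gnm \<in> carrier_mat (n - m) (n - m) \<and> invertible_mat gnm
           \<and> g = kron gm gnm"
proof -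
  define k where "k = n - m"
  have m0: "m > 0" and k0: "k > 0" and mn: "m < n" using assms(1,2) unfolding k_def by auto
  have g: "g \<in> carrier_mat (m*k) (m*k)" using assms(6) unfolding k_def .
  obtain A0 B0 where A0: "A0 \<in> carrier_mat n m" and B0: "B0 \<in> carrier_mat n k"
    and rA0: "full_rank A0" and rB0: "full_rank B0" and P: "kron A B = kron A0 B0"
    using assms(5) unfolding Y_def k_def by blast
  obtain A1 B1 where A1: "A1 \<in> carrier_mat n m" and B1: "B1 \<in> carrier_mat n k"
    and rA1: "full_rank A1" and rB1: "full_rank B1" and Q: "kron A B * g = kron A1 B1"
    using assms(8) unfolding Y_def k_def by blast
  have rk: "vec_space.rank n C = c" if "C \<in> carrier_mat n c" "full_rank C" "c < n \<or> c = k" for C c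
    using that k_def mn unfolding full_rank_def by auto
  obtain L0 where L0: "L0 \<in> carrier_mat m n" "L0 * A0 = 1\<^sub>m m"
    using left_inverse_exists[OF A0 rk[OF A0 rA0]] mn by auto
  obtain L1 where L1: "L1 \<in> carrier_mat m n" "L1 * A1 = 1\<^sub>m m"
    using left_inverse_exists[OF A1 rk[OF A1 rA1]] mn by auto
  obtain M0 where M0: "M0 \<in> carrier_mat k n" "M0 * B0 = 1\<^sub>m k"
    using left_inverse_exists[OF B0 rk[OF B0 rB0]] by auto
  obtain M1 where M1: "M1 \<in> carrier_mat k n" "M1 * B1 = 1\<^sub>m k"
    using left_inverse_exists[OF B1 rk[OF B1 rB1]] by auto
  obtain h where hg: "inverts_mat g h" "inverts_mat h g"
    using assms(7) unfolding invertible_mat_def by blast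
  have gh1: "g * h = 1\<^sub>m (m*k)" using hg(1) g unfolding inverts_mat_def by simp
  have hdc: "dim_col h = m*k" using arg_cong[OF gh1, of dim_col] by simp
  have hdr: "dim_row h = m*k" using arg_cong[OF hg(2)[unfolded inverts_mat_def], of dim_col] g by simp
  have h: "h \<in> carrier_mat (m*k) (m*k)" using hdc hdr by auto
  define PP where "PP = kron A0 B0"
  define QQ where "QQ = kron A1 B1"
  have PP: "PP \<in> carrier_mat (n*n) (m*k)" unfolding PP_def using A0 B0 by simp
  have QQ: "QQ \<in> carrier_mat (n*n) (m*k)" unfolding QQ_def using A1 B1 by simp
  have PgQ: "PP * g = QQ" using P Q unfolding PP_def QQ_def by simp
  have LP: "kron L0 M0 * PP = 1\<^sub>m (m*k)"
    unfolding PP_def using kron_mult[OF L0(1) M0(1) A0 B0] L0 M0 kron_one by simp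
  have LQ: "kron L1 M1 * QQ = 1\<^sub>m (m*k)"
    unfolding QQ_def using kron_mult[OF L1(1) M1(1) A1 B1] L1 M1 kron_one by simp
  have KL0: "kron L0 M0 \<in> carrier_mat (m*k) (n*n)" using L0 M0 by simp
  have KL1: "kron L1 M1 \<in> carrier_mat (m*k) (n*n)" using L1 M1 by simp
  have "g = (kron L0 M0 * PP) * g" using LP g by simp
  also have "\<dots> = kron L0 M0 * QQ" using KL0 PP g PgQ by (simp add: assoc_mult_mat)
  also have "\<dots> = kron (L0*A1) (M0*B1)" unfolding QQ_def using kron_mult[OF L0(1) M0(1) A1 B1] .
  finally have gk: "g = kron (L0*A1) (M0*B1)" .
  have QhP: "QQ * h = PP" using PgQ[symmetric] PP g h gh1 by (simp add: assoc_mult_mat)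
  have "h = (kron L1 M1 * QQ) * h" using LQ h by simp
  also have "\<dots> = kron L1 M1 * PP" using KL1 QQ h QhP by (simp add: assoc_mult_mat)
  also have "\<dots> = kron (L1*A0) (M1*B0)" unfolding PP_def using kron_mult[OF L1(1) M1(1) A0 B0] .
  finally have hk: "h = kron (L1*A0) (M1*B0)" .
  define gm where "gm = L0*A1"
  define gnm where "gnm = M0*B1"
  define X where "X = L1*A0"
  define W where "W = M1*B0"
  have gm: "gm \<in> carrier_mat m m" and gnm: "gnm \<in> carrier_mat k k"
    and X: "X \<in> carrier_mat m m" and W: "W \<in> carrier_mat k k"
    unfolding gm_def gnm_def X_def W_def using L0 L1 M0 M1 A0 A1 B0 B1 by auto
  have E: "kron (gm*X) (gnm*W) = 1\<^sub>m (m*k)"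
    using gh1 unfolding gk hk gm_def gnm_def X_def W_def
    using kron_mult[of "L0*A1" m m "M0*B1" k k "L1*A0" m "M1*B0" k] gm gnm X W
    unfolding gm_def gnm_def X_def W_def by simp
  have GX: "gm*X \<in> carrier_mat m m" and GW: "gnm*W \<in> carrier_mat k k" using gm gnm X W by auto
  from kron_eq_one_left[OF GX GW k0 m0 E]
  have e1: "(gnm*W) $$ (0,0) \<noteq> 0" "gm*X = (1 / (gnm*W) $$ (0,0)) \<cdot>\<^sub>m 1\<^sub>m m" by auto
  from kron_eq_one_right[OF GX GW m0 k0 E]
  have e2: "(gm*X) $$ (0,0) \<noteq> 0" "gnm*W = (1 / (gm*X) $$ (0,0)) \<cdot>\<^sub>m 1\<^sub>m k" by auto
  have igm: "invertible_mat gm"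
    using scaled_right_inv_invertible[OF gm X _ e1(2)] e1(1) by simp
  have ignm: "invertible_mat gnm"
    using scaled_right_inv_invertible[OF gnm W _ e2(2)] e2(1) by simp
  show ?thesis
    using gm gnm igm ignm gk unfolding gm_def gnm_def k_def by blast
qed

end
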